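(* Let $(\tau,R)$ be a generic $M$-layer model and $\psi=\Psi(\tau,R)$. Then $U_\psi\subset\mathbb{R}^{M+1}$ is a convex open set containing $\tau$, and $\mathcal{R}_\psi\subset(-1,1)^{M+1}$ is an open set containing $R$.
   Context: An $M$-layer model ($M\ge1$) is $(\tau,R)$ with $\tau\in\mathbb{R}^{M+1}_{>0}$, $R\in(-1,1)^{M+1}$. $\mathfrak{L}_M\subset\mathbb{Z}^{M+1}_{\geq0}$: all $k$ with $k_0=1$ and $k_n>0\Rightarrow k_{n-1}>0$ ($1\le n\le M$); $\mathfrak{L}^\tau_M=\{k\in\mathfrak{L}_M:\langle k,\tau\rangle\le\langle\mathbb{1},\tau\rangle\}$. Amplitude polynomial: $\mathbb{1}=(1,\ldots,1)$; inequalities and $\min$ entrywise; $x^k=\prod_n x_n^{k_n}$, $\binom{k}{b}=\prod_n\binom{k_n}{b_n}$; $\tilde k=(k_1,\ldots,k_M,0)$, $u=\min\{\mathbb{1},\tilde k\}$, $V(k)=\{b:u\le b\le\min\{k,\tilde k\}\}$, $a(x,k)=\sum_{b\in V(k)}\binom{k}{b}\binom{\tilde k-u}{b-u}(-x)^{\tilde k-b}x^{k-b}\prod_n(1-x_n^2)^{b_n}$. Data: $D^{(\tau,R)}(t)=\sum_{k\in\mathfrak{L}^\tau_M}a(R,k)\delta(t-\langle k,\tau\rangle)$, in normal form $\sum_{n=1}^d\alpha_n\delta(t-\sigma_n)$ ($\alpha_n\ne0$, $\sigma_1<\cdots<\sigma_d$). With $S=\{\sigma_n\}$, the enumeration function $\Psi(\tau,R):\mathfrak{L}^\tau_M\to\{0,\ldots,d\}$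 sends $k$ to $0$ if $\langle k,\tau\rangle\notin S$ and to $1+\#\{s\in S:s<\langle k,\tau\rangle\}$ otherwise. $(\tau,R)$ is generic if $\Psi(\tau,R)$ is injective and never $0$. For $\psi=\Psi(\tau,R)$ with $(\tau,R)$ generic: $\mathcal{R}_\psi=\{R'\in(-1,1)^{M+1}: a(R',k)\ne0\ \forall k\in\mathfrak{L}^\tau_M\}$, and $U_\psi=\{\tau'\in\mathbb{R}^{M+1}_{>0}:\Psi(\tau',R')=\psi\text{ for all }R'\in\mathcal{R}_\psi\}$ (equality of functions, including equality of domains $\mathfrak{L}^{\tau'}_M=\mathfrak{L}^\tau_M$). *)

theory Defs
  imports "HOL-Analysis.Analysis"
begin

text \<open>Vectors in R^(M+1) (indices 0..M) are represented as functions nat => real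
  that vanish for indices > M.  Multi-indices k in Z_{>=0}^(M+1) likewise as nat => nat.\<close>

definition Rsp :: "nat \<Rightarrow> (nat \<Rightarrow> real) set" where
  "Rsp M = {x. \<forall>n>M. x n = 0}"

definition Nsp :: "nat \<Rightarrow> (nat \<Rightarrow> nat) set" where
  "Nsp M = {k. \<forall>n>M. k n = 0}"

definition pos_vecs :: "nat \<Rightarrow> (nat \<Rightarrow> real) set" where
  "pos_vecs M = {x \<in> Rsp M. \<forall>n\<le>M. x n > 0}"

definition refl_vecs :: "nat \<Rightarrow> (nat \<Rightarrow> real) set" where
  "refl_vecs M = {x \<in> Rsp M. \<forall>n\<le>M. -1 < x n \<and> x n < 1}"

definition ipr :: "nat \<Rightarrow> (nat \<Rightarrow> nat) \<Rightarrow> (nat \<Rightarrow> real) \<Rightarrow> real" where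
  "ipr M k \<tau> = (\<Sum>n\<le>M. real (k n) * \<tau> n)"

definition LM :: "nat \<Rightarrow> (nat \<Rightarrow> nat) set" where
  "LM M = {k \<in> Nsp M. k 0 = 1 \<and> (\<forall>n\<in>{1..M}. k n > 0 \<longrightarrow> k (n - 1) > 0)}"

definition LMtau :: "nat \<Rightarrow> (nat \<Rightarrow> real) \<Rightarrow> (nat \<Rightarrow> nat) set" where
  "LMtau M \<tau> = {k \<in> LM M. ipr M k \<tau> \<le> ipr M (\<lambda>n. if n \<le> M then 1 else 0) \<tau>}"

definition ktil :: "nat \<Rightarrow> (nat \<Rightarrow> nat) \<Rightarrow> nat \<Rightarrow> nat" where
  "ktil M k = (\<lambda>n. if n < M then k (n + 1) else 0)"

definition uvec :: "nat \<Rightarrow> (nat \<Rightarrow> nat) \<Rightarrow> nat \<Rightarrow> nat" where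
  "uvec M k = (\<lambda>n. if n \<le> M then min 1 (ktil M k n) else 0)"

definition Vset :: "nat \<Rightarrow> (nat \<Rightarrow> nat) \<Rightarrow> (nat \<Rightarrow> nat) set" where
  "Vset M k = {b \<in> Nsp M. \<forall>n\<le>M. uvec M k n \<le> b n \<and> b n \<le> min (k n) (ktil M k n)}"

definition ampl :: "nat \<Rightarrow> (nat \<Rightarrow> real) \<Rightarrow> (nat \<Rightarrow> nat) \<Rightarrow> real" where
  "ampl M x k = (\<Sum>b\<in>Vset M k. \<Prod>n\<le>M.
      real (k n choose b n) * real ((ktil M k n - uvec M k n) choose (b n - uvec M k n))
      * (- x n) ^ (ktil M k n - b n) * x n ^ (k n - b n) * (1 - (x n)\<^sup>2) ^ (b n))"

definition coef :: "nat \<Rightarrow> (nat \<Rightarrow> real) \<Rightarrow> (nat \<Rightarrow> real) \<Rightarrow> real \<Rightarrow> real" where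
  "coef M \<tau> R t = (\<Sum>k\<in>{k \<in> LMtau M \<tau>. ipr M k \<tau> = t}. ampl M R k)"

definition supp_times :: "nat \<Rightarrow> (nat \<Rightarrow> real) \<Rightarrow> (nat \<Rightarrow> real) \<Rightarrow> real set" where
  "supp_times M \<tau> R = {t \<in> (\<lambda>k. ipr M k \<tau>) ` LMtau M \<tau>. coef M \<tau> R t \<noteq> 0}"

text \<open>Enumeration function Psi(tau,R); its domain is LMtau M tau.\<close>
definition Psi :: "nat \<Rightarrow> (nat \<Rightarrow> real) \<Rightarrow> (nat \<Rightarrow> real) \<Rightarrow> (nat \<Rightarrow> nat) \<Rightarrow> nat" where
  "Psi M \<tau> R k = (if ipr M k \<tau> \<notin> supp_times M \<tau> R then 0
      else 1 + card {s \<in> supp_times M \<tau> R. s < ipr M k \<tau>})"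

definition generic :: "nat \<Rightarrow> (nat \<Rightarrow> real) \<Rightarrow> (nat \<Rightarrow> real) \<Rightarrow> bool" where
  "generic M \<tau> R \<longleftrightarrow> \<tau> \<in> pos_vecs M \<and> R \<in> refl_vecs M \<and>
     inj_on (Psi M \<tau> R) (LMtau M \<tau>) \<and> (\<forall>k\<in>LMtau M \<tau>. Psi M \<tau> R k \<noteq> 0)"

definition Rpsi :: "nat \<Rightarrow> (nat \<Rightarrow> nat) set \<Rightarrow> (nat \<Rightarrow> real) set" where
  "Rpsi M L = {R' \<in> refl_vecs M. \<forall>k\<in>L. ampl M R' k \<noteq> 0}"

text \<open>U_psi for psi with domain L: equality of functions including domains.\<close>
definition Upsi :: "nat \<Rightarrow> (nat \<Rightarrow> nat) set \<Rightarrow> ((nat \<Rightarrow> nat) \<Rightarrow> nat) \<Rightarrow> (nat \<Rightarrow> real) set" where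
  "Upsi M L \<psi> = {\<tau>' \<in> pos_vecs M. \<forall>R'\<in>Rpsi M L.
      LMtau M \<tau>' = L \<and> (\<forall>k\<in>L. Psi M \<tau>' R' k = \<psi> k)}"

definition convex_coords :: "(nat \<Rightarrow> real) set \<Rightarrow> bool" where
  "convex_coords S \<longleftrightarrow> (\<forall>x\<in>S. \<forall>y\<in>S. \<forall>t::real. 0 \<le> t \<and> t \<le> 1 \<longrightarrow>
      (\<lambda>n. (1 - t) * x n + t * y n) \<in> S)"

end

theory Submission
  imports Defs
begin

lemma finite_box: "finite {k\<in>Nsp M. \<forall>n\<le>M. k n \<le> B}"
proof (rule finite_subset)
  show "{k\<in>Nsp M. \<forall>n\<le>M. k n \<le> B} \<subseteq> (\<lambda>f n. if n \<le> M then f n else 0) ` PiE {..M} (\<lambda>_. {..B})"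
  proof
    fix k assume k: "k \<in> {k\<in>Nsp M. \<forall>n\<le>M. k n \<le> B}"
    have "k = (\<lambda>n. if n \<le> M then restrict k {..M} n else 0)"
      using k by (auto simp: Nsp_def fun_eq_iff)
    moreover have "restrict k {..M} \<in> PiE {..M} (\<lambda>_. {..B})" using k by auto
    ultimately show "k \<in> (\<lambda>f n. if n \<le> M then f n else 0) ` PiE {..M} (\<lambda>_. {..B})" by blast
  qed
qed (intro finite_imageI finite_PiE; simp)

lemma ipr_single:
  assumes "x \<in> pos_vecs M" "n \<le> M"
  shows "real (k n) * x n \<le> ipr M k x"
  unfolding ipr_def using assms
  by (intro member_le_sum) (auto simp: pos_vecs_def less_imp_le)

lemma finite_LMtau:
  assumes "x \<in> pos_vecs M"
  shows "finite (LMtau M x)"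
proof -
  define d where "d = Min (x ` {..M})"
  have "d \<in> x ` {..M}" unfolding d_def by (intro Min_in) auto
  then have dpos: "d > 0" using assms by (auto simp: pos_vecs_def)
  have dle: "d \<le> x n" if "n \<le> M" for n unfolding d_def using that by (intro Min_le) auto
  define C where "C = ipr M (\<lambda>n. if n \<le> M then 1 else 0) x"
  define B where "B = nat \<lceil>C / d\<rceil>"
  have "LMtau M x \<subseteq> {k\<in>Nsp M. \<forall>n\<le>M. k n \<le> B}"
  proof safe
    fix k assume k: "k \<in> LMtau M x"
    then show "k \<in> Nsp M" by (auto simp: LMtau_def LM_def)
    fix n assume n: "n \<le> M"
    have "real (k n) * d \<le> real (k n) * x n" using dle[OF n] by (intro mult_left_mono) auto
    also have "\<dots> \<le> ipr M k x" by (rule ipr_single[OF assms n])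
    also have "\<dots> \<le> C" using k by (auto simp: LMtau_def C_def)
    finally have "real (k n) \<le> C / d" using dpos by (simp add: field_simps)
    then show "k n \<le> B" unfolding B_def by linarith
  qed
  then show ?thesis using finite_box finite_subset by blast
qed

definition one :: "nat \<Rightarrow> nat \<Rightarrow> nat" where "one M = (\<lambda>n. if n \<le> M then 1 else 0)"

lemma one_LMtau: "one M \<in> LMtau M x"
  by (auto simp: one_def LMtau_def LM_def Nsp_def)

lemma Psi_same: "ipr M k x = ipr M k' x \<Longrightarrow> Psi M x R k = Psi M x R k'"
  by (simp add: Psi_def)

lemma Psi_mono:
  assumes "finite (LMtau M x)" "Psi M x R k \<noteq> 0" "Psi M x R k' \<noteq> 0" "ipr M k x < ipr M k' x"
  shows "Psi M x R k < Psi M x R k'"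
proof -
  let ?S = "supp_times M x R"
  have fin: "finite ?S" using assms(1) unfolding supp_times_def by auto
  have kin: "ipr M k x \<in> ?S" using assms(2) by (auto simp: Psi_def split: if_splits)
  have k'in: "ipr M k' x \<in> ?S" using assms(3) by (auto simp: Psi_def split: if_splits)
  have "{s \<in> ?S. s < ipr M k x} \<subset> {s \<in> ?S. s < ipr M k' x}"
    using kin assms(4) by auto
  then have "card {s \<in> ?S. s < ipr M k x} < card {s \<in> ?S. s < ipr M k' x}"
    using fin by (intro psubset_card_mono) auto
  then show ?thesis using kin k'in by (simp add: Psi_def)
qed
lemma coef_inj:
  assumes inj: "inj_on (\<lambda>k. ipr M k x) (LMtau M x)" and j: "j \<in> LMtau M x"
  shows "coef M x R' (ipr M j x) = ampl M R' j"
proof -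
  have "{k \<in> LMtau M x. ipr M k x = ipr M j x} = {j}"
    using inj j by (auto dest: inj_onD)
  then show ?thesis by (simp add: coef_def)
qed

lemma supp_inj:
  assumes inj: "inj_on (\<lambda>k. ipr M k x) (LMtau M x)" and nz: "\<forall>k\<in>LMtau M x. ampl M R' k \<noteq> 0"
  shows "supp_times M x R' = (\<lambda>k. ipr M k x) ` LMtau M x"
  using coef_inj[OF inj] nz by (auto simp: supp_times_def)

lemma Psi_inj_formula:
  assumes inj: "inj_on (\<lambda>k. ipr M k x) (LMtau M x)" and nz: "\<forall>k\<in>LMtau M x. ampl M R' k \<noteq> 0"
    and k: "k \<in> LMtau M x"
  shows "Psi M x R' k = 1 + card {j \<in> LMtau M x. ipr M j x < ipr M k x}"
proof -
  have S: "supp_times M x R' = (\<lambda>k. ipr M k x) ` LMtau M x" by (rule supp_inj[OF inj nz])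
  have "{s \<in> supp_times M x R'. s < ipr M k x} = (\<lambda>k. ipr M k x) ` {j \<in> LMtau M x. ipr M j x < ipr M k x}"
    unfolding S by auto
  moreover have "card ((\<lambda>k. ipr M k x) ` {j \<in> LMtau M x. ipr M j x < ipr M k x})
      = card {j \<in> LMtau M x. ipr M j x < ipr M k x}"
    by (rule card_image) (rule inj_on_subset[OF inj], auto)
  moreover have "ipr M k x \<in> supp_times M x R'" unfolding S using k by auto
  ultimately show ?thesis by (simp add: Psi_def)
qed

lemma cont_ipr: "continuous_on UNIV (\<lambda>x. ipr M k x)"
  unfolding ipr_def by (intro continuous_intros) simp

lemma cont_ampl: "continuous_on UNIV (\<lambda>x. ampl M x k)"
  unfolding ampl_def by (intro continuous_intros) simp_all

lemma open_fin_all: "finite I \<Longrightarrow> (\<And>i. i\<in>I \<Longrightarrow> open {x. Q i x}) \<Longrightarrow> open {x. \<forall>i\<in>I. Q i x}"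
proof -
  assume "finite I" "\<And>i. i\<in>I \<Longrightarrow> open {x. Q i x}"
  then have "open (\<Inter>i\<in>I. {x. Q i x})" by (intro open_INT) auto
  moreover have "(\<Inter>i\<in>I. {x. Q i x}) = {x. \<forall>i\<in>I. Q i x}" by auto
  ultimately show ?thesis by simp
qed

lemma ipr_comb: "ipr M k (\<lambda>n. (1 - s) * x n + s * y n) = (1 - s) * ipr M k x + s * ipr M k y"
  unfolding ipr_def sum_distrib_left sum.distrib[symmetric] by (intro sum.cong) (auto simp: algebra_simps)

lemma comb_less:
  fixes a b c d s :: real
  assumes "a < b" "c < d" "0 \<le> s" "s \<le> 1"
  shows "(1 - s) * a + s * c < (1 - s) * b + s * d"
proof (cases "s = 0")
  case True then show ?thesis using assms by simp
next
  case False
  then have "s * c < s * d" using assms by simp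
  moreover have "(1 - s) * a \<le> (1 - s) * b" using assms by (intro mult_left_mono) auto
  ultimately show ?thesis by linarith
qed

theorem proposition4p2:
  fixes M :: nat and \<tau> R :: "nat \<Rightarrow> real"
  assumes "M \<ge> 1"
    and "generic M \<tau> R"
  shows "convex_coords (Upsi M (LMtau M \<tau>) (Psi M \<tau> R))
    \<and> openin (top_of_set (Rsp M)) (Upsi M (LMtau M \<tau>) (Psi M \<tau> R))
    \<and> \<tau> \<in> Upsi M (LMtau M \<tau>) (Psi M \<tau> R)
    \<and> openin (top_of_set (Rsp M)) (Rpsi M (LMtau M \<tau>))
    \<and> R \<in> Rpsi M (LMtau M \<tau>)"
proof -
  define L where "L = LMtau M \<tau>"
  define \<psi> where "\<psi> = Psi M \<tau> R"
  have tpos: "\<tau> \<in> pos_vecs M" and Rrefl: "R \<in> refl_vecs M" and injpsi: "inj_on \<psi> L"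
    and nzpsi: "\<forall>k\<in>L. \<psi> k \<noteq> 0"
    using assms(2) by (auto simp: generic_def L_def \<psi>_def)
  have finL: "finite L" unfolding L_def by (rule finite_LMtau[OF tpos])
  have injt: "inj_on (\<lambda>k. ipr M k \<tau>) L"
  proof (rule inj_onI)
    fix k k' assume "k \<in> L" "k' \<in> L" "ipr M k \<tau> = ipr M k' \<tau>"
    then show "k = k'" using injpsi Psi_same[of M k \<tau> k' R] by (auto simp: \<psi>_def dest: inj_onD)
  qed
  have ampR: "\<forall>k\<in>L. ampl M R k \<noteq> 0"
  proof
    fix k assume k: "k \<in> L"
    then have "ipr M k \<tau> \<in> supp_times M \<tau> R" using nzpsi by (auto simp: \<psi>_def Psi_def split: if_splits)
    then have "coef M \<tau> R (ipr M k \<tau>) \<noteq> 0" by (simp add: supp_times_def)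
    then show "ampl M R k \<noteq> 0" using coef_inj[of M \<tau> k R] injt k by (simp add: L_def)
  qed
  have Rin: "R \<in> Rpsi M L" using Rrefl ampR by (simp add: Rpsi_def)
  have psiF: "\<psi> k = 1 + card {j \<in> L. ipr M j \<tau> < ipr M k \<tau>}" if "k \<in> L" for k
    unfolding \<psi>_def L_def using Psi_inj_formula[of M \<tau> R k] injt ampR that by (simp add: L_def)
  have oneL: "one M \<in> L" unfolding L_def by (rule one_LMtau)
  define Ord where "Ord x \<longleftrightarrow> (\<forall>k\<in>L. \<forall>k'\<in>L. ipr M k \<tau> < ipr M k' \<tau> \<longrightarrow> ipr M k x < ipr M k' x)" for x
  define Out where "Out x \<longleftrightarrow> (\<forall>k\<in>LM M - L. ipr M (one M) x < ipr M k x)" for x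
  have char: "Upsi M L \<psi> = {x \<in> pos_vecs M. Ord x \<and> Out x}"
  proof (intro set_eqI iffI)
    fix x assume x: "x \<in> Upsi M L \<psi>"
    then have xpos: "x \<in> pos_vecs M" and LL: "LMtau M x = L" and PP: "\<forall>k\<in>L. Psi M x R k = \<psi> k"
      using Rin by (auto simp: Upsi_def)
    have finx: "finite (LMtau M x)" using LL finL by simp
    have "Out x" unfolding Out_def
    proof
      fix k assume "k \<in> LM M - L"
      then show "ipr M (one M) x < ipr M k x" using LL by (auto simp: LMtau_def one_def)
    qed
    moreover have "Ord x" unfolding Ord_def
    proof (intro ballI impI)
      fix k k' assume k: "k \<in> L" and k': "k' \<in> L" and lt: "ipr M k \<tau> < ipr M k' \<tau>"
      have "\<psi> k < \<psi> k'" unfolding \<psi>_def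
        by (rule Psi_mono[OF finite_LMtau[OF tpos]]) (use nzpsi k k' lt in \<open>auto simp: \<psi>_def\<close>)
      then have lt2: "Psi M x R k < Psi M x R k'" using PP k k' by simp
      show "ipr M k x < ipr M k' x"
      proof (rule ccontr)
        assume "\<not> ipr M k x < ipr M k' x"
        then consider "ipr M k' x = ipr M k x" | "ipr M k' x < ipr M k x" by linarith
        then show False
        proof cases
          case 1 then show False using Psi_same[of M k' x k R] lt2 by simp
        next
          case 2
          have "Psi M x R k' < Psi M x R k"
            by (rule Psi_mono[OF finx _ _ 2]) (use PP nzpsi k k' in auto)
          then show False using lt2 by simp
        qed
      qed
    qed
    ultimately show "x \<in> {x \<in> pos_vecs M. Ord x \<and> Out x}" using xpos by simp
  next
    fix x assume "x \<in> {x \<in> pos_vecs M. Ord x \<and> Out x}"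
    then have xpos: "x \<in> pos_vecs M" and O: "Ord x" and U: "Out x" by auto
    have LL: "LMtau M x = L"
    proof (intro set_eqI iffI)
      fix k assume k: "k \<in> LMtau M x"
      show "k \<in> L"
      proof (rule ccontr)
        assume "k \<notin> L"
        then have "ipr M (one M) x < ipr M k x" using U k by (auto simp: Out_def LMtau_def)
        then show False using k by (auto simp: LMtau_def one_def)
      qed
    next
      fix k assume k: "k \<in> L"
      show "k \<in> LMtau M x"
      proof (cases "k = one M")
        case True then show ?thesis by (simp add: one_LMtau)
      next
        case False
        then have "ipr M k \<tau> \<noteq> ipr M (one M) \<tau>" using injt k oneL by (auto dest: inj_onD)
        moreover have "ipr M k \<tau> \<le> ipr M (one M) \<tau>" using k by (auto simp: L_def LMtau_def one_def)
        ultimately have "ipr M k \<tau> < ipr M (one M) \<tau>" by simp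
        then have "ipr M k x < ipr M (one M) x" using O k oneL by (auto simp: Ord_def)
        then show ?thesis using k by (auto simp: L_def LMtau_def one_def)
      qed
    qed
    have injx: "inj_on (\<lambda>k. ipr M k x) L"
    proof (rule inj_onI)
      fix k k' assume k: "k \<in> L" and k': "k' \<in> L" and eq: "ipr M k x = ipr M k' x"
      show "k = k'"
      proof (rule ccontr)
        assume "k \<noteq> k'"
        then have "ipr M k \<tau> \<noteq> ipr M k' \<tau>" using injt k k' by (auto dest: inj_onD)
        then have "ipr M k \<tau> < ipr M k' \<tau> \<or> ipr M k' \<tau> < ipr M k \<tau>" by linarith
        then show False using O k k' eq unfolding Ord_def by (metis less_irrefl)
      qed
    qed
    have "\<forall>R'\<in>Rpsi M L. LMtau M x = L \<and> (\<forall>k\<in>L. Psi M x R' k = \<psi> k)"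
    proof (intro ballI conjI)
      fix R' k assume R': "R' \<in> Rpsi M L" and k: "k \<in> L"
      have "Psi M x R' k = 1 + card {j \<in> L. ipr M j x < ipr M k x}"
        using Psi_inj_formula[of M x R' k] injx R' k LL by (auto simp: Rpsi_def)
      also have "{j \<in> L. ipr M j x < ipr M k x} = {j \<in> L. ipr M j \<tau> < ipr M k \<tau>}"
      proof (intro set_eqI iffI)
        fix j assume "j \<in> {j \<in> L. ipr M j \<tau> < ipr M k \<tau>}"
        then show "j \<in> {j \<in> L. ipr M j x < ipr M k x}" using O k by (auto simp: Ord_def)
      next
        fix j assume j: "j \<in> {j \<in> L. ipr M j x < ipr M k x}"
        then have "j \<noteq> k" by auto
        then have "ipr M j \<tau> \<noteq> ipr M k \<tau>" using injt j k by (auto dest: inj_onD)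
        moreover have "\<not> ipr M k \<tau> < ipr M j \<tau>" using O j k unfolding Ord_def by (metis (mono_tags, lifting) mem_Collect_eq not_less_iff_gr_or_eq)
        ultimately show "j \<in> {j \<in> L. ipr M j \<tau> < ipr M k \<tau>}" using j by auto
      qed
      finally show "Psi M x R' k = \<psi> k" using psiF[OF k] by simp
    qed (rule LL)
    then show "x \<in> Upsi M L \<psi>" using xpos by (simp add: Upsi_def)
  qed
  have tauU: "\<tau> \<in> Upsi M L \<psi>"
  proof -
    have "Out \<tau>" by (auto simp: Out_def L_def LMtau_def one_def)
    then show ?thesis using tpos by (simp add: char Ord_def)
  qed
  have conv: "convex_coords (Upsi M L \<psi>)"
    unfolding convex_coords_def char
  proof (intro ballI allI impI)
    fix x y and s :: real assume x: "x \<in> {x \<in> pos_vecs M. Ord x \<and> Out x}" and y: "y \<in> {x \<in> pos_vecs M. Ord x \<and> Out x}"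
      and s: "0 \<le> s \<and> s \<le> 1"
    let ?z = "\<lambda>n. (1 - s) * x n + s * y n"
    have "?z \<in> pos_vecs M"
    proof -
      have "?z n > 0" if "n \<le> M" for n
        using comb_less[of 0 "x n" 0 "y n" s] x y s that by (auto simp: pos_vecs_def)
      moreover have "?z \<in> Rsp M" using x y by (auto simp: pos_vecs_def Rsp_def)
      ultimately show ?thesis by (simp add: pos_vecs_def)
    qed
    moreover have "Ord ?z" using x y s unfolding Ord_def ipr_comb by (auto intro!: comb_less)
    moreover have "Out ?z" using x y s unfolding Out_def ipr_comb by (auto intro!: comb_less)
    ultimately show "?z \<in> {x \<in> pos_vecs M. Ord x \<and> Out x}" by simp
  qed
  have openR: "openin (top_of_set (Rsp M)) (Rpsi M L)"
  proof -
    have eq: "Rpsi M L = Rsp M \<inter> ({x. \<forall>n\<in>{..M}. -1 < x n \<and> x n < 1} \<inter> {x. \<forall>k\<in>L. ampl M x k \<noteq> 0})"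
      by (auto simp: Rpsi_def refl_vecs_def)
    have o1: "open {x::nat\<Rightarrow>real. \<forall>n\<in>{..M}. -1 < x n \<and> x n < 1}"
    proof (rule open_fin_all)
      fix n
      have "open ({x::nat\<Rightarrow>real. -1 < x n} \<inter> {x. x n < 1})"
        by (intro open_Int open_Collect_less continuous_on_const) simp_all
      moreover have "{x::nat\<Rightarrow>real. -1 < x n} \<inter> {x. x n < 1} = {x. -1 < x n \<and> x n < 1}" by auto
      ultimately show "open {x::nat\<Rightarrow>real. -1 < x n \<and> x n < 1}" by simp
    qed simp
    have o2: "open {x. \<forall>k\<in>L. ampl M x k \<noteq> 0}"
      by (intro open_fin_all finL open_Collect_neq cont_ampl continuous_on_const)
    show ?thesis unfolding eq by (intro openin_open_Int open_Int o1 o2)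
  qed
  have openOrd: "open {x. Ord x}"
  proof -
    have "open {x. \<forall>p\<in>{p \<in> L \<times> L. ipr M (fst p) \<tau> < ipr M (snd p) \<tau>}. ipr M (fst p) x < ipr M (snd p) x}"
      by (intro open_fin_all open_Collect_less cont_ipr) (use finL in auto)
    moreover have "{x. \<forall>p\<in>{p \<in> L \<times> L. ipr M (fst p) \<tau> < ipr M (snd p) \<tau>}. ipr M (fst p) x < ipr M (snd p) x} = {x. Ord x}"
      by (auto simp: Ord_def)
    ultimately show ?thesis by simp
  qed
  have openU: "openin (top_of_set (Rsp M)) (Upsi M L \<psi>)"
  proof (subst openin_subopen, intro ballI)
    fix x0 assume x0U: "x0 \<in> Upsi M L \<psi>"
    then have x0pos: "x0 \<in> pos_vecs M" and O0: "Ord x0" and U0: "Out x0" by (auto simp: char)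
    define d where "d = Min (x0 ` {..M})"
    have "d \<in> x0 ` {..M}" unfolding d_def by (intro Min_in) auto
    then have dpos: "d > 0" using x0pos by (auto simp: pos_vecs_def)
    have dle: "d \<le> x0 n" if "n \<le> M" for n unfolding d_def using that by (intro Min_le) auto
    define C where "C = ipr M (one M) x0"
    have "real (one M 0) * x0 0 \<le> C" unfolding C_def by (rule ipr_single[OF x0pos]) simp
    then have Cpos: "C > 0" using x0pos by (auto simp: one_def pos_vecs_def)
    define B where "B = nat \<lceil>4 * C / d\<rceil>"
    define F where "F = {k \<in> Nsp M. \<forall>n\<le>M. k n \<le> B}"
    have finF: "finite F" unfolding F_def by (rule finite_box)
    define V where "V = {x. \<forall>n\<in>{..M}. x0 n / 2 < x n} \<inter> {x. ipr M (one M) x < 2 * C} \<inter> {x. Ord x}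
        \<inter> {x. \<forall>k\<in>(F \<inter> LM M) - L. ipr M (one M) x < ipr M k x}"
    have openV: "open V" unfolding V_def
      by (intro open_Int openOrd open_fin_all open_Collect_less cont_ipr continuous_on_const finite_Diff
          finite_Int finF) (simp_all add: finF)
    have x0V: "x0 \<in> V" unfolding V_def using O0 U0 x0pos Cpos
      by (auto simp: pos_vecs_def Out_def C_def)
    have sub: "Rsp M \<inter> V \<subseteq> Upsi M L \<psi>"
    proof
      fix x assume x: "x \<in> Rsp M \<inter> V"
      have xn: "x0 n / 2 < x n" if "n \<le> M" for n using x that by (auto simp: V_def)
      have xpos: "x \<in> pos_vecs M"
        using x xn x0pos by (auto simp: pos_vecs_def) (smt (verit) field_sum_of_halves)
      have "Ord x" using x by (auto simp: V_def)
      moreover have "Out x" unfolding Out_def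
      proof
        fix k assume k: "k \<in> LM M - L"
        show "ipr M (one M) x < ipr M k x"
        proof (cases "k \<in> F")
          case True then show ?thesis using x k by (auto simp: V_def)
        next
          case False
          then obtain n where n: "n \<le> M" and kn: "k n > B" using k by (auto simp: F_def LM_def)
          have "4 * C / d \<le> real B" unfolding B_def by linarith
          also have "\<dots> < real (k n)" using kn by simp
          finally have "4 * C < real (k n) * d" using dpos by (simp add: field_simps)
          moreover have "real (k n) * d \<le> real (k n) * (2 * x n)"
            using dle[OF n] xn[OF n] by (intro mult_left_mono) auto
          moreover have "real (k n) * x n \<le> ipr M k x" by (rule ipr_single[OF xpos n])
          moreover have "ipr M (one M) x < 2 * C" using x by (auto simp: V_def)
          ultimately show ?thesis by linarith
        qed
      qed
      ultimately show "x \<in> Upsi M L \<psi>" using xpos by (simp add: char)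
    qed
    show "\<exists>T. openin (top_of_set (Rsp M)) T \<and> x0 \<in> T \<and> T \<subseteq> Upsi M L \<psi>"
      using x0pos x0V sub openV by (intro exI[of _ "Rsp M \<inter> V"]) (auto simp: pos_vecs_def)
  qed
  show ?thesis using conv openU tauU openR Rin by (simp add: L_def \<psi>_def)
qed

end
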